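(* Let $\Gamma$ be a profinite group, let $Z_0$ be a finite $\Gamma$-set with $|Z_0|=n\geq 1$, and let $\pi\colon Z\to Z_0$ be a $\Gamma$-covering of degree $2$, with canonical involution $\sigma$ of $Z$. Let $\delta\colon C(Z/Z_0)\to\Delta(Z)$ be the canonical map, and let $\iota$ denote the nontrivial automorphism of the two-element set $\Delta(Z)$. Then: (1) for sections $\omega,\omega'\in C(Z/Z_0)$ we have $\delta(\omega)=\delta(\omega')$ if and only if $|\omega\cap\omega'|\equiv n \pmod 2$; (2) for every section $\omega$, writing $\underline{\sigma}(\omega)=Z\setminus\omega$ for its complement, we have $\delta(\underline{\sigma}(\omega))=\delta(\omega)$ if $n$ is even and $\delta(\underline{\sigma}(\omega))=\iota(\delta(\omega))$ if $n$ is odd.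
   Context: A (finite) $\Gamma$-set is a finite set with a continuous left action of $\Gamma$ (discrete topology). A $\Gamma$-covering of degree $2$ is a $\Gamma$-equivariant map $\pi\colon Z\to Z_0$ all of whose fibers have exactly $2$ elements; its canonical involution $\sigma\colon Z\to Z$ interchanges the two elements of each fiber. The set of sections $C(Z/Z_0)$ is the set of subsets $\{z_1,\dots,z_n\}\subset Z$ with $\{\pi(z_1),\dots,\pi(z_n)\}=Z_0$ (not necessarily $\Gamma$-stable); $\Gamma$ acts on it. For a $\Gamma$-set $X$ with $|X|=m\geq 2$, let $\Sigma_m(X)$ be the set of $m$-tuples $(x_1,\dots,x_m)$ with $X=\{x_1,\dots,x_m\}$, with the right action of the symmetric group $\mathfrak S_m$; the discriminant $\Delta(X)=\Sigma_m(X)/\mathfrak A_m$ is the two-element $\Gamma$-set of orbits of the alternating group. The map $\delta\colon C(Z/Z_0)\to\Delta(Z)$ sends a section $\{z_1,\dots,z_n\}$ to the $\mathfrak A_{2n}$-orbit of $(z_1,\dots,z_n,\sigma(z_1),\dots,\sigma(z_n))$. *)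

theory Defs
  imports "HOL-Algebra.Group_Action" "HOL-Combinatorics.Permutations"
begin

definition covering2 :: "'a set \<Rightarrow> 'b set \<Rightarrow> ('a \<Rightarrow> 'b) \<Rightarrow> bool" where
  "covering2 Z Z0 \<pi> \<longleftrightarrow> finite Z \<and> \<pi> ` Z \<subseteq> Z0 \<and> (\<forall>y\<in>Z0. card {z\<in>Z. \<pi> z = y} = 2)"

definition cov_inv :: "'a set \<Rightarrow> ('a \<Rightarrow> 'b) \<Rightarrow> 'a \<Rightarrow> 'a" where
  "cov_inv Z \<pi> z = (THE w. w \<in> Z \<and> \<pi> w = \<pi> z \<and> w \<noteq> z)"

definition sections :: "'a set \<Rightarrow> 'b set \<Rightarrow> ('a \<Rightarrow> 'b) \<Rightarrow> 'a set set" where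
  "sections Z Z0 \<pi> = {\<omega>. \<omega> \<subseteq> Z \<and> card \<omega> = card Z0 \<and> \<pi> ` \<omega> = Z0}"

definition tuples :: "'a set \<Rightarrow> 'a list set" where
  "tuples X = {xs. length xs = card X \<and> set xs = X}"

definition alt_orbit :: "'a set \<Rightarrow> 'a list \<Rightarrow> 'a list set" where
  "alt_orbit X xs = {ys. \<exists>p. p permutes {..<card X} \<and> evenperm p \<and> ys = permute_list p xs}"

definition discriminant :: "'a set \<Rightarrow> 'a list set set" where
  "discriminant X = alt_orbit X ` tuples X"

definition delta :: "'a set \<Rightarrow> ('a \<Rightarrow> 'b) \<Rightarrow> 'a set \<Rightarrow> 'a list set" where
  "delta Z \<pi> \<omega> = (let zs = (SOME zs. distinct zs \<and> set zs = \<omega>)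
                    in alt_orbit Z (zs @ map (cov_inv Z \<pi>) zs))"

definition disc_swap :: "'a set \<Rightarrow> 'a list set \<Rightarrow> 'a list set" where
  "disc_swap Z d = (THE d'. d' \<in> discriminant Z \<and> d' \<noteq> d)"

end

theory Submission
  imports Defs
begin


lemma permute_list_inj:
  assumes "distinct xs" "f permutes {..<length xs}" "g permutes {..<length xs}"
    and "permute_list f xs = permute_list g xs"
  shows "f = g"
proof
  fix i show "f i = g i"
  proof (cases "i < length xs")
    case True
    have "xs ! f i = xs ! g i"
      using arg_cong[OF assms(4), of "\<lambda>l. l ! i"] permute_list_nth[OF assms(2) True]
        permute_list_nth[OF assms(3) True] by simp
    moreover have "f i < length xs" "g i < length xs"
      using permutes_in_image[OF assms(2)] permutes_in_image[OF assms(3)] True by auto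
    ultimately show ?thesis using assms(1) nth_eq_iff_index_eq by blast
  next
    case False
    then show ?thesis using permutes_not_in[OF assms(2)] permutes_not_in[OF assms(3)] by auto
  qed
qed

lemma perm_fin: "p permutes {..<(m::nat)} \<Longrightarrow> permutation p"
  using permutes_imp_permutation by blast

lemma orbit_eq:
  assumes "distinct xs" "length xs = card X"
    and p: "p permutes {..<length xs}" and q: "q permutes {..<length xs}"
  shows "alt_orbit X (permute_list p xs) = alt_orbit X (permute_list q xs) \<longleftrightarrow> (evenperm p \<longleftrightarrow> evenperm q)"
proof
  assume eq: "alt_orbit X (permute_list p xs) = alt_orbit X (permute_list q xs)"
  have "permute_list p xs \<in> alt_orbit X (permute_list p xs)"
    unfolding alt_orbit_def by (rule CollectI, rule exI[of _ id]) simp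
  then obtain r where r: "r permutes {..<length xs}" "evenperm r"
     "permute_list p xs = permute_list r (permute_list q xs)"
    using eq assms(2) unfolding alt_orbit_def by auto
  then have "permute_list p xs = permute_list (q \<circ> r) xs" by (simp add: permute_list_compose)
  then have "p = q \<circ> r" using permute_list_inj[OF assms(1) p permutes_compose[OF r(1) q]] by simp
  then show "evenperm p \<longleftrightarrow> evenperm q"
    using evenperm_comp[OF perm_fin[OF q] perm_fin[OF r(1)]] r(2) by simp
next
  assume ev: "evenperm p \<longleftrightarrow> evenperm q"
  have main: "alt_orbit X (permute_list p xs) \<subseteq> alt_orbit X (permute_list q xs)"
    if p: "p permutes {..<length xs}" and q: "q permutes {..<length xs}"
      and ev: "evenperm p \<longleftrightarrow> evenperm q" for p q
  proof
    fix ys assume "ys \<in> alt_orbit X (permute_list p xs)"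
    then obtain r where r: "r permutes {..<length xs}" "evenperm r"
       "ys = permute_list r (permute_list p xs)"
      using assms(2) unfolding alt_orbit_def by auto
    define s where "s = Hilbert_Choice.inv q \<circ> p \<circ> r"
    have sp: "s permutes {..<length xs}" unfolding s_def
      by (intro permutes_compose permutes_inv r p q)
    have "evenperm s" unfolding s_def
      using evenperm_comp[OF perm_fin[OF permutes_compose[OF p permutes_inv[OF q]]] perm_fin[OF r(1)]]
        evenperm_comp[OF perm_fin[OF permutes_inv[OF q]] perm_fin[OF p]]
        evenperm_inv[OF perm_fin[OF q]] r(2) ev by auto
    have "q \<circ> s = p \<circ> r" unfolding s_def using permutes_inv_o(1)[OF q]
      by (simp add: o_assoc)
    then have "ys = permute_list s (permute_list q xs)"
      using r(3) by (simp add: permute_list_compose[symmetric] sp r(1))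
    then show "ys \<in> alt_orbit X (permute_list q xs)"
      unfolding alt_orbit_def using sp \<open>evenperm s\<close> assms(2) by auto
  qed
  show "alt_orbit X (permute_list p xs) = alt_orbit X (permute_list q xs)"
    using main[OF p q ev] main[OF q p] ev by blast
qed



definition flipP :: "nat \<Rightarrow> nat set \<Rightarrow> nat \<Rightarrow> nat" where
  "flipP n S i = (if i < n \<and> i \<in> S then i + n else if n \<le> i \<and> i < 2*n \<and> i - n \<in> S then i - n else i)"

lemma flipP_props:
  assumes "finite S" "S \<subseteq> {..<n}"
  shows "flipP n S permutes {..<2*n} \<and> (evenperm (flipP n S) \<longleftrightarrow> even (card S))"
  using assms
proof (induction S rule: finite_induct)
  case empty
  have "flipP n {} = (\<lambda>x. x)" by (auto simp: flipP_def)
  then show ?case using permutes_id[of "{..<2*n}"] by (simp add: id_def)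
next
  case (insert a S)
  have a: "a < n" using insert by auto
  have eq: "flipP n (insert a S) = transpose a (a+n) \<circ> flipP n S"
  proof
    fix i show "flipP n (insert a S) i = (transpose a (a+n) \<circ> flipP n S) i"
      using insert(2) insert(4) a by (auto simp: flipP_def transpose_def)
  qed
  have IH: "flipP n S permutes {..<2*n}" "evenperm (flipP n S) \<longleftrightarrow> even (card S)"
    using insert by auto
  have t: "transpose a (a+n) permutes {..<2*n}" using a by (intro permutes_swap_id) auto
  have "evenperm (flipP n (insert a S)) \<longleftrightarrow> \<not> evenperm (flipP n S)"
    unfolding eq using evenperm_comp[OF perm_fin[OF t] perm_fin[OF IH(1)]] a
    by (simp add: evenperm_swap)
  moreover have "card (insert a S) = Suc (card S)" using insert(1,2) by simp
  ultimately show ?case using IH eq permutes_compose[OF IH(1) t] by (simp only:) simp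
qed

definition dup :: "nat \<Rightarrow> (nat \<Rightarrow> nat) \<Rightarrow> nat \<Rightarrow> nat" where
  "dup n t i = (if i < n then t i else if i < 2*n then t (i - n) + n else i)"

lemma dup_props:
  assumes "t permutes {..<n}"
  shows "dup n t permutes {..<2*n} \<and> evenperm (dup n t)"
  using assms finite_lessThan
proof (induction rule: permutes_induct)
  case id
  have "dup n id = (\<lambda>x. x)" by (auto simp: dup_def)
  then show ?case using permutes_id[of "{..<2*n}"] by (simp add: id_def)
next
  case (swap a b p)
  have ab: "a < n" "b < n" using swap by auto
  have pp: "p permutes {..<n}" using swap by blast
  have pin: "\<And>i. i < n \<Longrightarrow> p i < n" using permutes_in_image[OF pp] by auto
  have eq: "dup n (transpose a b \<circ> p) = (transpose a b \<circ> transpose (a+n) (b+n)) \<circ> dup n p"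
  proof
    fix i show "dup n (transpose a b \<circ> p) i = ((transpose a b \<circ> transpose (a+n) (b+n)) \<circ> dup n p) i"
      using ab pin[of i] pin[of "i - n"] by (auto simp: dup_def transpose_def)
  qed
  have t1: "transpose a b permutes {..<2*n}" "transpose (a+n) (b+n) permutes {..<2*n}"
    using ab by (auto intro!: permutes_swap_id)
  have tt: "transpose a b \<circ> transpose (a+n) (b+n) permutes {..<2*n}"
    by (rule permutes_compose[OF t1(2) t1(1)])
  have "evenperm (transpose a b \<circ> transpose (a+n) (b+n))"
    using evenperm_comp[OF perm_fin[OF t1(1)] perm_fin[OF t1(2)]] swap(3)
    by (simp add: evenperm_swap)
  moreover have IH: "dup n p permutes {..<2*n}" "evenperm (dup n p)" using swap by blast+
  ultimately show ?case unfolding eq using evenperm_comp[OF perm_fin[OF tt] perm_fin[OF IH(1)]]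
    permutes_compose[OF IH(1) tt] by (simp only:)
qed



definition Lst :: "'a set \<Rightarrow> 'a list" where "Lst \<omega> = (SOME zs. distinct zs \<and> set zs = \<omega>)"

context
  fixes Z :: "'a set" and Z0 :: "'b set" and \<pi> :: "'a \<Rightarrow> 'b"
  assumes cov: "covering2 Z Z0 \<pi>"
begin

lemma finZ: "finite Z" using cov unfolding covering2_def by auto

lemma fib: assumes "z \<in> Z" shows "\<exists>w. {x\<in>Z. \<pi> x = \<pi> z} = {z, w} \<and> w \<noteq> z"
proof -
  have "\<pi> z \<in> Z0" using cov assms unfolding covering2_def by auto
  then have "card {x\<in>Z. \<pi> x = \<pi> z} = 2" using cov unfolding covering2_def by auto
  then obtain a b where ab: "{x\<in>Z. \<pi> x = \<pi> z} = {a, b}" "a \<noteq> b" unfolding card_2_iff by blast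
  have "z \<in> {a,b}" using assms ab(1) by blast
  then show ?thesis
  proof
    assume "z = a" then show ?thesis using ab by blast
  next
    assume "z \<in> {b}" then have "z = b" by simp
    then have "{x\<in>Z. \<pi> x = \<pi> z} = {z, a}" using ab by auto
    then show ?thesis using ab \<open>z = b\<close> by blast
  qed
qed

lemma sig: assumes "z \<in> Z"
  shows "cov_inv Z \<pi> z \<in> Z" "\<pi> (cov_inv Z \<pi> z) = \<pi> z" "cov_inv Z \<pi> z \<noteq> z"
    "\<And>w. w \<in> Z \<Longrightarrow> \<pi> w = \<pi> z \<Longrightarrow> w = z \<or> w = cov_inv Z \<pi> z"
proof -
  obtain w where w: "{x\<in>Z. \<pi> x = \<pi> z} = {z, w}" "w \<noteq> z" using fib[OF assms] by blast
  have w2: "w \<in> Z" "\<pi> w = \<pi> z" using w by blast+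
  have "cov_inv Z \<pi> z = w" unfolding cov_inv_def
  proof (rule the_equality)
    show "w \<in> Z \<and> \<pi> w = \<pi> z \<and> w \<noteq> z" using w w2 by blast
    fix x assume "x \<in> Z \<and> \<pi> x = \<pi> z \<and> x \<noteq> z" then show "x = w" using w by blast
  qed
  then show "cov_inv Z \<pi> z \<in> Z" "\<pi> (cov_inv Z \<pi> z) = \<pi> z" "cov_inv Z \<pi> z \<noteq> z"
    "\<And>v. v \<in> Z \<Longrightarrow> \<pi> v = \<pi> z \<Longrightarrow> v = z \<or> v = cov_inv Z \<pi> z" using w w2 by blast+
qed

lemma sigsig: assumes "z \<in> Z" shows "cov_inv Z \<pi> (cov_inv Z \<pi> z) = z"
proof -
  let ?s = "cov_inv Z \<pi>"
  have "?s (?s z) \<in> Z" "\<pi> (?s (?s z)) = \<pi> z" "?s (?s z) \<noteq> ?s z"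
    using sig[OF assms] sig[OF sig(1)[OF assms]] by auto
  then show ?thesis using sig(4)[OF assms] by blast
qed

context
  fixes \<omega> assumes om: "\<omega> \<in> sections Z Z0 \<pi>" and finZ0: "finite Z0"
begin

lemma om_sub: "\<omega> \<subseteq> Z" and om_card: "card \<omega> = card Z0" and om_img: "\<pi> ` \<omega> = Z0"
  using om unfolding sections_def by auto

lemma om_fin: "finite \<omega>" using om_sub finZ finite_subset by blast

lemma om_inj: "inj_on \<pi> \<omega>"
proof -
  have "card (\<pi> ` \<omega>) = card \<omega>" using om_card om_img by simp
  then show ?thesis by (rule eq_card_imp_inj_on[OF om_fin])
qed

lemma om_other: "z \<in> \<omega> \<Longrightarrow> cov_inv Z \<pi> z \<notin> \<omega>"
  using om_inj om_sub sig[of z] unfolding inj_on_def by blast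

lemma om_part: "Z = \<omega> \<union> cov_inv Z \<pi> ` \<omega>"
proof
  show "Z \<subseteq> \<omega> \<union> cov_inv Z \<pi> ` \<omega>"
  proof
    fix z assume z: "z \<in> Z"
    then have "\<pi> z \<in> \<pi> ` \<omega>" using cov om_img unfolding covering2_def by auto
    then obtain w where w: "w \<in> \<omega>" "\<pi> w = \<pi> z" by auto
    then have "z = w \<or> z = cov_inv Z \<pi> w" using sig(4)[of w z] om_sub z by auto
    then show "z \<in> \<omega> \<union> cov_inv Z \<pi> ` \<omega>" using w by auto
  qed
  show "\<omega> \<union> cov_inv Z \<pi> ` \<omega> \<subseteq> Z" using om_sub sig(1) by auto
qed


lemma Lst: "distinct (Lst \<omega>)" "set (Lst \<omega>) = \<omega>" "length (Lst \<omega>) = card Z0"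
proof -
  have "\<exists>zs. distinct zs \<and> set zs = \<omega>" using finite_distinct_list[OF om_fin] by blast
  then have "distinct (Lst \<omega>) \<and> set (Lst \<omega>) = \<omega>" unfolding Lst_def by (rule someI_ex)
  then show "distinct (Lst \<omega>)" "set (Lst \<omega>) = \<omega>" by auto
  then show "length (Lst \<omega>) = card Z0" using distinct_card[of "Lst \<omega>"] om_card by simp
qed

lemma LL: "distinct ((Lst \<omega>) @ map (cov_inv Z \<pi>) (Lst \<omega>))" "set ((Lst \<omega>) @ map (cov_inv Z \<pi>) (Lst \<omega>)) = Z"
  "length ((Lst \<omega>) @ map (cov_inv Z \<pi>) (Lst \<omega>)) = 2 * card Z0" "card Z = 2 * card Z0"
proof -
  have inj: "inj_on (cov_inv Z \<pi>) \<omega>"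
  proof (rule inj_onI)
    fix x y assume "x \<in> \<omega>" "y \<in> \<omega>" "cov_inv Z \<pi> x = cov_inv Z \<pi> y"
    then show "x = y" using sigsig[of x] sigsig[of y] om_sub by auto
  qed
  show d: "distinct ((Lst \<omega>) @ map (cov_inv Z \<pi>) (Lst \<omega>))"
    using Lst inj om_other by (auto simp: distinct_map)
  show s: "set ((Lst \<omega>) @ map (cov_inv Z \<pi>) (Lst \<omega>)) = Z" using Lst om_part by simp
  show l: "length ((Lst \<omega>) @ map (cov_inv Z \<pi>) (Lst \<omega>)) = 2 * card Z0" using Lst by simp
  show "card Z = 2 * card Z0" using distinct_card[OF d] s l by simp
qed

lemma delta_eq: "delta Z \<pi> \<omega> = alt_orbit Z ((Lst \<omega>) @ map (cov_inv Z \<pi>) (Lst \<omega>))"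
  unfolding delta_def Lst_def Let_def by simp

end

lemma main_perm:
  assumes o1: "\<omega> \<in> sections Z Z0 \<pi>" and o2: "\<omega>' \<in> sections Z Z0 \<pi>" and fin: "finite Z0"
  defines "n \<equiv> card Z0"
  shows "\<exists>q. q permutes {..<2*n} \<and>
     Lst \<omega>' @ map (cov_inv Z \<pi>) (Lst \<omega>') = permute_list q (Lst \<omega> @ map (cov_inv Z \<pi>) (Lst \<omega>))
     \<and> (evenperm q \<longleftrightarrow> card (\<omega> \<inter> \<omega>') mod 2 = n mod 2)"
proof -
  let ?s = "cov_inv Z \<pi>"
  define zs where "zs = Lst \<omega>"
  define L where "L = zs @ map ?s zs"
  have zs: "distinct zs" "set zs = \<omega>" "length zs = n"
    using Lst[OF o1 fin] unfolding zs_def n_def by auto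
  have zsZ: "\<And>i. i < n \<Longrightarrow> zs ! i \<in> Z" using zs om_sub[OF o1 fin] nth_mem by (metis subsetD)
  define ys where "ys = map (\<lambda>z. if z \<in> \<omega>' then z else ?s z) zs"
  define S where "S = {i. i < n \<and> zs ! i \<notin> \<omega>'}"
  have S: "finite S" "S \<subseteq> {..<n}" unfolding S_def by auto
  have fl: "flipP n S permutes {..<2*n}" "evenperm (flipP n S) \<longleftrightarrow> even (card S)"
    using flipP_props[OF S] by auto
  have yin: "\<And>z. z \<in> \<omega> \<Longrightarrow> z \<notin> \<omega>' \<Longrightarrow> ?s z \<in> \<omega>'"
  proof -
    fix z assume z: "z \<in> \<omega>" "z \<notin> \<omega>'"
    have zZ: "z \<in> Z" using z om_sub[OF o1 fin] by auto
    have "\<pi> z \<in> \<pi> ` \<omega>'" using om_img[OF o1 fin] om_img[OF o2 fin] z by auto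
    then obtain w where w: "w \<in> \<omega>'" "\<pi> w = \<pi> z" by auto
    then have "w = z \<or> w = ?s z" using sig(4)[OF zZ, of w] om_sub[OF o2 fin] by auto
    then show "?s z \<in> \<omega>'" using w z by auto
  qed
  have ysub: "set ys \<subseteq> \<omega>'" unfolding ys_def using zs yin by auto
  have ydist: "distinct ys"
  proof -
    have "inj_on (\<lambda>z. if z \<in> \<omega>' then z else ?s z) \<omega>"
    proof (rule inj_onI)
      fix x y assume xy: "x \<in> \<omega>" "y \<in> \<omega>" "(if x \<in> \<omega>' then x else ?s x) = (if y \<in> \<omega>' then y else ?s y)"
      have xZ: "x \<in> Z" "y \<in> Z" using xy om_sub[OF o1 fin] by auto
      have "\<pi> (if x \<in> \<omega>' then x else ?s x) = \<pi> x" "\<pi> (if y \<in> \<omega>' then y else ?s y) = \<pi> y"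
        using sig(2)[OF xZ(1)] sig(2)[OF xZ(2)] by auto
      then have "\<pi> x = \<pi> y" using xy(3) by metis
      then show "x = y" using om_inj[OF o1 fin] xy(1,2) unfolding inj_on_def by blast
    qed
    then show ?thesis unfolding ys_def using zs by (simp add: distinct_map)
  qed
  have ylen: "length ys = n" unfolding ys_def using zs by simp
  have yset: "set ys = \<omega>'"
  proof (rule card_subset_eq)
    show "finite \<omega>'" using om_fin[OF o2 fin] .
    show "set ys \<subseteq> \<omega>'" by (rule ysub)
    show "card (set ys) = card \<omega>'" using distinct_card[OF ydist] ylen om_card[OF o2 fin] n_def by simp
  qed
  have stepA: "ys @ map ?s ys = permute_list (flipP n S) L"
  proof (rule nth_equalityI)
    show "length (ys @ map ?s ys) = length (permute_list (flipP n S) L)"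
      unfolding L_def using ylen zs by simp
    fix i assume "i < length (ys @ map ?s ys)"
    then have i: "i < 2*n" using ylen by simp
    have pn: "permute_list (flipP n S) L ! i = L ! flipP n S i"
      using permute_list_nth[of "flipP n S" L i] fl(1) i zs unfolding L_def by (simp add: mult_2)
    show "(ys @ map ?s ys) ! i = permute_list (flipP n S) L ! i"
    proof (cases "i < n")
      case True
      then show ?thesis unfolding pn unfolding L_def ys_def flipP_def S_def using zs
        by (auto simp: nth_append)
    next
      case False
      then have "i - n < n" using i by simp
      then show ?thesis unfolding pn unfolding L_def ys_def flipP_def S_def using zs False i
          sigsig[OF zsZ[OF \<open>i - n < n\<close>]]
        by (auto simp: nth_append)
    qed
  qed
  define zs' where "zs' = Lst \<omega>'"
  have zs': "distinct zs'" "set zs' = \<omega>'" "length zs' = n"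
    using Lst[OF o2 fin] unfolding zs'_def n_def by auto
  have "mset zs' = mset ys" using zs' yset ydist set_eq_iff_mset_eq_distinct by metis
  then obtain t where t: "t permutes {..<length ys}" "permute_list t ys = zs'"
    by (rule mset_eq_permutation)
  have tn: "t permutes {..<n}" using t ylen by simp
  have du: "dup n t permutes {..<2*n}" "evenperm (dup n t)" using dup_props[OF tn] by auto
  have tin: "\<And>i. i < n \<Longrightarrow> t i < n" using permutes_in_image[OF tn] by auto
  have stepB: "zs' @ map ?s zs' = permute_list (dup n t) (ys @ map ?s ys)"
  proof (rule nth_equalityI)
    show "length (zs' @ map ?s zs') = length (permute_list (dup n t) (ys @ map ?s ys))"
      using ylen zs' by simp
    fix i assume "i < length (zs' @ map ?s zs')"
    then have i: "i < 2*n" using zs' by simp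
    have pn: "permute_list (dup n t) (ys @ map ?s ys) ! i = (ys @ map ?s ys) ! dup n t i"
      using permute_list_nth[of "dup n t" "ys @ map ?s ys" i] du(1) i ylen by (simp add: mult_2)
    have zn: "\<And>j. j < n \<Longrightarrow> zs' ! j = ys ! t j"
    proof -
      fix j assume j: "j < n"
      have "zs' ! j = permute_list t ys ! j" using t(2) by simp
      also have "\<dots> = ys ! t j" using permute_list_nth[OF t(1)] j ylen by simp
      finally show "zs' ! j = ys ! t j" .
    qed
    show "(zs' @ map ?s zs') ! i = permute_list (dup n t) (ys @ map ?s ys) ! i"
    proof (cases "i < n")
      case True
      then show ?thesis unfolding pn unfolding dup_def using zs' ylen zn tin by (auto simp: nth_append)
    next
      case False
      then have "i - n < n" using i by simp
      then show ?thesis unfolding pn unfolding dup_def using zs' ylen zn[OF \<open>i - n < n\<close>] tin[OF \<open>i - n < n\<close>] False i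
        by (auto simp: nth_append)
    qed
  qed
  have Llen: "length L = 2*n" unfolding L_def using zs by simp
  have final: "zs' @ map ?s zs' = permute_list (flipP n S \<circ> dup n t) L"
    using stepA stepB permute_list_compose[of "dup n t" L "flipP n S"] du(1) Llen by simp
  have ev: "evenperm (flipP n S \<circ> dup n t) \<longleftrightarrow> even (card S)"
    using evenperm_comp[OF perm_fin[OF fl(1)] perm_fin[OF du(1)]] du(2) fl(2) by simp
  have imS: "(\<lambda>i. zs ! i) ` S = \<omega> - \<omega>'"
  proof
    show "(\<lambda>i. zs ! i) ` S \<subseteq> \<omega> - \<omega>'" unfolding S_def using zs nth_mem by fastforce
    show "\<omega> - \<omega>' \<subseteq> (\<lambda>i. zs ! i) ` S"
    proof
      fix z assume z: "z \<in> \<omega> - \<omega>'"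
      then obtain i where "i < n" "zs ! i = z" using zs by (metis DiffD1 in_set_conv_nth)
      then show "z \<in> (\<lambda>i. zs ! i) ` S" unfolding S_def using z by auto
    qed
  qed
  have injS: "inj_on (\<lambda>i. zs ! i) S" using zs S(2) inj_on_nth[of zs S] by auto
  have "card S = card (\<omega> - \<omega>')" using card_image[OF injS] imS by simp
  also have "\<dots> = card \<omega> - card (\<omega> \<inter> \<omega>')"
    by (rule card_Diff_subset_Int) (use om_fin[OF o1 fin] in simp)
  finally have cS: "card S = n - card (\<omega> \<inter> \<omega>')" using om_card[OF o1 fin] n_def by simp
  have kle: "card (\<omega> \<inter> \<omega>') \<le> n"
    using card_mono[OF om_fin[OF o1 fin], of "\<omega> \<inter> \<omega>'"] om_card[OF o1 fin] n_def by auto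
  have par: "even (card S) \<longleftrightarrow> card (\<omega> \<inter> \<omega>') mod 2 = n mod 2"
    unfolding cS using kle by presburger
  show ?thesis
  proof (intro exI conjI)
    show "flipP n S \<circ> dup n t permutes {..<2*n}" using permutes_compose[OF du(1) fl(1)] .
    show "Lst \<omega>' @ map ?s (Lst \<omega>') = permute_list (flipP n S \<circ> dup n t) (Lst \<omega> @ map ?s (Lst \<omega>))"
      using final unfolding zs'_def L_def zs_def .
    show "evenperm (flipP n S \<circ> dup n t) \<longleftrightarrow> card (\<omega> \<inter> \<omega>') mod 2 = n mod 2"
      using ev par by simp
  qed
qed

end


theorem proposition2p1:
  fixes G :: "('g, 'm) monoid_scheme" (structure)
    and \<phi> :: "'g \<Rightarrow> 'a \<Rightarrow> 'a" and \<psi> :: "'g \<Rightarrow> 'b \<Rightarrow> 'b"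
    and Z :: "'a set" and Z0 :: "'b set" and \<pi> :: "'a \<Rightarrow> 'b" and n :: nat
  assumes "group G"
    and "group_action G Z \<phi>" and "group_action G Z0 \<psi>"
    and "finite Z0" and "card Z0 = n" and "n \<ge> 1"
    and "covering2 Z Z0 \<pi>"
    and "\<forall>g\<in>carrier G. \<forall>z\<in>Z. \<pi> (\<phi> g z) = \<psi> g (\<pi> z)"
  shows "(\<forall>\<omega>\<in>sections Z Z0 \<pi>. \<forall>\<omega>'\<in>sections Z Z0 \<pi>.
            delta Z \<pi> \<omega> = delta Z \<pi> \<omega>' \<longleftrightarrow> card (\<omega> \<inter> \<omega>') mod 2 = n mod 2)
       \<and> (\<forall>\<omega>\<in>sections Z Z0 \<pi>.
            delta Z \<pi> (Z - \<omega>) = (if even n then delta Z \<pi> \<omega> else disc_swap Z (delta Z \<pi> \<omega>)))"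
proof -
  note cov = assms(7) and fin = assms(4) and nd = assms(5)
  let ?s = "cov_inv Z \<pi>"
  let ?L = "\<lambda>\<omega>. Lst \<omega> @ map ?s (Lst \<omega>)"
  have key: "delta Z \<pi> \<omega> = delta Z \<pi> \<omega>' \<longleftrightarrow> evenperm q"
    if o1: "\<omega> \<in> sections Z Z0 \<pi>" and o2: "\<omega>' \<in> sections Z Z0 \<pi>" and q: "q permutes {..<2*n}"
      and L: "?L \<omega>' = permute_list q (?L \<omega>)" for \<omega> \<omega>' q
  proof -
    have d: "distinct (?L \<omega>)" and l: "length (?L \<omega>) = card Z" and l2: "length (?L \<omega>) = 2*n"
      using LL[OF cov o1 fin] nd by auto
    have "delta Z \<pi> \<omega> = alt_orbit Z (permute_list id (?L \<omega>))"
      using delta_eq[OF cov o1 fin] by simp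
    moreover have "delta Z \<pi> \<omega>' = alt_orbit Z (permute_list q (?L \<omega>))"
      using delta_eq[OF cov o2 fin] L by simp
    ultimately show ?thesis using orbit_eq[OF d l, of id q] q l2 by simp
  qed
  have P1: "\<forall>\<omega>\<in>sections Z Z0 \<pi>. \<forall>\<omega>'\<in>sections Z Z0 \<pi>.
            delta Z \<pi> \<omega> = delta Z \<pi> \<omega>' \<longleftrightarrow> card (\<omega> \<inter> \<omega>') mod 2 = n mod 2"
  proof (intro ballI)
    fix \<omega> \<omega>' assume o1: "\<omega> \<in> sections Z Z0 \<pi>" and o2: "\<omega>' \<in> sections Z Z0 \<pi>"
    obtain q where q: "q permutes {..<2*n}" "?L \<omega>' = permute_list q (?L \<omega>)"
       "evenperm q \<longleftrightarrow> card (\<omega> \<inter> \<omega>') mod 2 = n mod 2"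
      using main_perm[OF cov o1 o2 fin] unfolding nd by blast
    show "delta Z \<pi> \<omega> = delta Z \<pi> \<omega>' \<longleftrightarrow> card (\<omega> \<inter> \<omega>') mod 2 = n mod 2"
      using key[OF o1 o2 q(1,2)] q(3) by simp
  qed
  have P2: "delta Z \<pi> (Z - \<omega>) = (if even n then delta Z \<pi> \<omega> else disc_swap Z (delta Z \<pi> \<omega>))"
    if o1: "\<omega> \<in> sections Z Z0 \<pi>" for \<omega>
  proof -
    have part: "Z - \<omega> = ?s ` \<omega>" using om_part[OF cov o1 fin] om_other[OF cov o1 fin] by auto
    have inj: "inj_on ?s \<omega>"
    proof (rule inj_onI)
      fix x y assume "x \<in> \<omega>" "y \<in> \<omega>" "?s x = ?s y"
      then show "x = y" using sigsig[OF cov, of x] sigsig[OF cov, of y] om_sub[OF cov o1 fin] by auto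
    qed
    have "\<pi> ` (?s ` \<omega>) = (\<lambda>z. \<pi> (?s z)) ` \<omega>" by (simp add: image_image)
    also have "\<dots> = \<pi> ` \<omega>"
      by (rule image_cong) (use sig(2)[OF cov] om_sub[OF cov o1 fin] in auto)
    finally have img: "\<pi> ` (?s ` \<omega>) = \<pi> ` \<omega>" .
    have o2: "Z - \<omega> \<in> sections Z Z0 \<pi>"
      unfolding sections_def using part card_image[OF inj] img om_card[OF cov o1 fin] om_img[OF cov o1 fin]
      by auto
    obtain q where q: "q permutes {..<2*n}" "?L (Z - \<omega>) = permute_list q (?L \<omega>)"
       "evenperm q \<longleftrightarrow> card (\<omega> \<inter> (Z - \<omega>)) mod 2 = n mod 2"
      using main_perm[OF cov o1 o2 fin] unfolding nd by blast
    have qe: "evenperm q \<longleftrightarrow> even n" using q(3) by auto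
    have k: "delta Z \<pi> \<omega> = delta Z \<pi> (Z - \<omega>) \<longleftrightarrow> even n" using key[OF o1 o2 q(1,2)] qe by simp
    show ?thesis
    proof (cases "even n")
      case True then show ?thesis using k by simp
    next
      case False
      have d: "distinct (?L \<omega>)" and l: "length (?L \<omega>) = card Z" and l2: "length (?L \<omega>) = 2*n"
        and sL: "set (?L \<omega>) = Z"
        using LL[OF cov o1 fin] nd by auto
      have dw: "delta Z \<pi> \<omega> = alt_orbit Z (permute_list id (?L \<omega>))"
        using delta_eq[OF cov o1 fin] by simp
      have dz: "delta Z \<pi> (Z - \<omega>) = alt_orbit Z (permute_list q (?L \<omega>))"
        using delta_eq[OF cov o2 fin] q(2) by simp
      have mem: "delta Z \<pi> (Z - \<omega>) \<in> discriminant Z"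
        unfolding discriminant_def tuples_def using delta_eq[OF cov o2 fin] LL[OF cov o2 fin] by auto
      have "disc_swap Z (delta Z \<pi> \<omega>) = delta Z \<pi> (Z - \<omega>)"
        unfolding disc_swap_def
      proof (rule the_equality)
        show "delta Z \<pi> (Z - \<omega>) \<in> discriminant Z \<and> delta Z \<pi> (Z - \<omega>) \<noteq> delta Z \<pi> \<omega>"
          using mem k False by auto
        fix d' assume d': "d' \<in> discriminant Z \<and> d' \<noteq> delta Z \<pi> \<omega>"
        then obtain ys where ys: "length ys = card Z" "set ys = Z" "d' = alt_orbit Z ys"
          unfolding discriminant_def tuples_def by auto
        have dys: "distinct ys" using ys card_distinct[of ys] by simp
        have "mset ys = mset (?L \<omega>)" using set_eq_iff_mset_eq_distinct[OF dys d] ys(2) sL by simp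
        then obtain r where r: "r permutes {..<length (?L \<omega>)}" "permute_list r (?L \<omega>) = ys"
          by (rule mset_eq_permutation)
        have d'r: "d' = alt_orbit Z (permute_list r (?L \<omega>))" using ys(3) r(2) by simp
        have "alt_orbit Z (permute_list r (?L \<omega>)) \<noteq> alt_orbit Z (permute_list id (?L \<omega>))"
          using d' dw d'r by simp
        then have "\<not> evenperm r"
          using orbit_eq[OF d l r(1) permutes_id] by simp
        moreover have "q permutes {..<length (?L \<omega>)}" using q(1) l2 by simp
        ultimately have "alt_orbit Z (permute_list r (?L \<omega>)) = alt_orbit Z (permute_list q (?L \<omega>))"
          using orbit_eq[OF d l r(1)] qe False by simp
        then show "d' = delta Z \<pi> (Z - \<omega>)"
          using dz d'r by simp
      qed
      then show ?thesis using False by simp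
    qed
  qed
  show ?thesis
  proof (rule conjI)
    show "\<forall>\<omega>\<in>sections Z Z0 \<pi>. delta Z \<pi> (Z - \<omega>) = (if even n then delta Z \<pi> \<omega> else disc_swap Z (delta Z \<pi> \<omega>))"
      using P2 by (rule ballI)
  qed (rule P1)
qed


end
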